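(* If $G$ is an appended star of order $n$, maximum degree $\Delta=3$ and diameter at least $8$, then $\gamma^{\rm ID}(G)\le \frac23 n=\left(\frac{\Delta-1}{\Delta}\right)n$.
   Context: An identifying code of a graph $G$ is a set $C\subseteq V(G)$ such that every vertex $v$ has $N[v]\cap C\neq\emptyset$ and for all distinct $u,v$, $N[u]\cap C \ne N[v]\cap C$, where $N[v]$ is the closed neighborhood; $\gamma^{\rm ID}(G)$ is its minimum size. A $k$-star is $K_{1,k}$. For a graph $G'$, a vertex $v$ of $G'$ and a star $S$, $G'\rhd_v S$ is the graph obtained from the disjoint union of $G'$ and $S$ by identifying $v$ with a leaf of $S$. An appended star is a graph $G_p$ obtained as follows: $G_0=S_0$ is a $\Delta_0$-star with $\Delta_0\ge3$, and for $i=1,\dots,p$, $G_i=G_{i-1}\rhd_{v_{i-1}}S_i$ where $S_i$ is a $\Delta_i$-star with $\Delta_i\ge 3$ and $v_{i-1}$ is a vertex of $G_{i-1}$. *)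

theory Defs
  imports Main
begin

type_synonym 'a graph = "'a set \<times> 'a set set"

definition verts :: "'a graph \<Rightarrow> 'a set" where "verts G = fst G"
definition edges :: "'a graph \<Rightarrow> 'a set set" where "edges G = snd G"

definition adj :: "'a graph \<Rightarrow> 'a \<Rightarrow> 'a \<Rightarrow> bool" where
  "adj G u v \<longleftrightarrow> {u, v} \<in> edges G \<and> u \<noteq> v"

definition open_nbhd :: "'a graph \<Rightarrow> 'a \<Rightarrow> 'a set" where
  "open_nbhd G v = {u \<in> verts G. adj G v u}"

definition closed_nbhd :: "'a graph \<Rightarrow> 'a \<Rightarrow> 'a set" where
  "closed_nbhd G v = insert v (open_nbhd G v)"

definition degree :: "'a graph \<Rightarrow> 'a \<Rightarrow> nat" where
  "degree G v = card (open_nbhd G v)"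

definition max_degree :: "'a graph \<Rightarrow> nat" where
  "max_degree G = Max (degree G ` verts G)"

definition adj_rel :: "'a graph \<Rightarrow> ('a \<times> 'a) set" where
  "adj_rel G = {(u, v). u \<in> verts G \<and> v \<in> verts G \<and> adj G u v}"

definition dist :: "'a graph \<Rightarrow> 'a \<Rightarrow> 'a \<Rightarrow> nat" where
  "dist G u v = (LEAST k. (u, v) \<in> (adj_rel G) ^^ k)"

definition diameter :: "'a graph \<Rightarrow> nat" where
  "diameter G = Max {dist G u v | u v. u \<in> verts G \<and> v \<in> verts G}"

definition is_identifying_code :: "'a graph \<Rightarrow> 'a set \<Rightarrow> bool" where
  "is_identifying_code G C \<longleftrightarrow> C \<subseteq> verts G
     \<and> (\<forall>v \<in> verts G. closed_nbhd G v \<inter> C \<noteq> {})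
     \<and> (\<forall>u \<in> verts G. \<forall>v \<in> verts G. u \<noteq> v \<longrightarrow> closed_nbhd G u \<inter> C \<noteq> closed_nbhd G v \<inter> C)"

definition gamma_ID :: "'a graph \<Rightarrow> nat" where
  "gamma_ID G = (LEAST k. \<exists>C. is_identifying_code G C \<and> card C = k)"

text \<open>In \<open>G' \<rhd>_v S\<close> the vertex \<open>v\<close> is identified with one leaf of \<open>S\<close>, so the new vertices
  are the centre \<open>c\<close> and the remaining \<open>k - 1\<close> leaves \<open>L\<close>, and the new edges join \<open>c\<close>
  to \<open>L \<union> {v}\<close>.\<close>
definition star_graph :: "'a \<Rightarrow> 'a set \<Rightarrow> 'a graph" where
  "star_graph c L = (insert c L, (\<lambda>x. {c, x}) ` L)"

inductive appended_star :: "'a graph \<Rightarrow> bool" where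
  base: "\<lbrakk> finite L; card L \<ge> 3; c \<notin> L \<rbrakk> \<Longrightarrow> appended_star (star_graph c L)"
| step: "\<lbrakk> appended_star G; v \<in> verts G; c \<notin> verts G; c \<notin> L; L \<inter> verts G = {};
           finite L; card (insert v L) \<ge> 3 \<rbrakk>
         \<Longrightarrow> appended_star (verts G \<union> insert c L, edges G \<union> (\<lambda>x. {c, x}) ` (insert v L))"

end

theory Submission
  imports Defs
begin

inductive good :: "'a graph \<Rightarrow> 'a set \<Rightarrow> bool" where
  gbase: "\<lbrakk> finite L; card L = 3; c \<notin> L \<rbrakk> \<Longrightarrow> good (star_graph c L) {c}"
| gstep: "\<lbrakk> good G Z; v \<in> verts G; v \<notin> Z; c \<notin> verts G; c \<notin> L; L \<inter> verts G = {};
           finite L; card L = 2 \<rbrakk>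
         \<Longrightarrow> good (verts G \<union> insert c L, edges G \<union> (\<lambda>x. {c, x}) ` (insert v L)) (insert c Z)"

lemma adj_sym: "adj G x y \<Longrightarrow> adj G y x"
  by (auto simp: adj_def insert_commute)

lemma adj_star: "c \<notin> L \<Longrightarrow> adj (star_graph c L) x y \<longleftrightarrow> (x = c \<and> y \<in> L) \<or> (y = c \<and> x \<in> L)"
  unfolding adj_def star_graph_def edges_def by (auto simp: doubleton_eq_iff)

lemma verts_star[simp]: "verts (star_graph c L) = insert c L"
  by (simp add: star_graph_def verts_def)

lemma adj_step:
  assumes "c \<notin> verts G" "c \<notin> L" "v \<in> verts G"
  shows "adj (verts G \<union> insert c L, edges G \<union> (\<lambda>x. {c, x}) ` (insert v L)) x y \<longleftrightarrow>
     adj G x y \<or> (x = c \<and> y \<in> insert v L) \<or> (y = c \<and> x \<in> insert v L)"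
  using assms unfolding adj_def edges_def by (auto simp: doubleton_eq_iff)

lemma verts_step[simp]: "verts (A, B) = A" "edges (A,B) = B"
  by (simp_all add: verts_def edges_def)

lemma good_fin: "good G Z \<Longrightarrow> finite (verts G) \<and> Z \<subseteq> verts G \<and> card (verts G) = 3 * card Z + 1"
proof (induction rule: good.induct)
  case (gbase L c)
  then show ?case by simp
next
  case (gstep G Z v c L)
  have "card (verts G \<union> insert c L) = card (verts G) + card (insert c L)"
    using gstep by (intro card_Un_disjoint) auto
  moreover have "card (insert c L) = 3" using gstep by simp
  moreover have "card (insert c Z) = Suc (card Z)" using gstep
    by (meson card_insert_disjoint finite_subset subset_iff)
  ultimately show ?case using gstep by auto
qed

lemma good_edges: "good G Z \<Longrightarrow> e \<in> edges G \<Longrightarrow> \<exists>z w. e = {z, w} \<and> z \<in> Z \<and> w \<in> verts G \<and> w \<notin> Z"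
proof (induction arbitrary: e rule: good.induct)
  case (gbase L c)
  then show ?case by (auto simp: star_graph_def edges_def)
next
  case (gstep G Z v c L)
  show ?case
  proof (cases "e \<in> edges G")
    case True
    then obtain z w where "e = {z, w}" "z \<in> Z" "w \<in> verts G" "w \<notin> Z" using gstep.IH by blast
    then show ?thesis using gstep.hyps by (intro exI[of _ z] exI[of _ w]) auto
  next
    case False
    then obtain x where "x \<in> insert v L" "e = {c, x}" using gstep.prems by auto
    then show ?thesis using gstep.hyps good_fin[OF gstep.hyps(1)]
      by (intro exI[of _ c] exI[of _ x]) auto
  qed
qed

lemma good_adj: assumes "good G Z" "adj G x y"
  shows "x \<in> verts G \<and> y \<in> verts G \<and> (x \<in> Z \<longleftrightarrow> y \<notin> Z)"
proof -
  have "{x, y} \<in> edges G" "x \<noteq> y" using assms(2) by (auto simp: adj_def)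
  then obtain z w where "{x, y} = {z, w}" "z \<in> Z" "w \<in> verts G" "w \<notin> Z"
    using good_edges[OF assms(1)] by blast
  moreover have "Z \<subseteq> verts G" using good_fin[OF assms(1)] by blast
  ultimately show ?thesis by (auto simp: doubleton_eq_iff)
qed

lemma good_nbhd_step:
  assumes "good G Z" "v \<in> verts G" "v \<notin> Z" "c \<notin> verts G" "c \<notin> L" "L \<inter> verts G = {}"
  shows "z \<in> Z \<Longrightarrow> open_nbhd (verts G \<union> insert c L, edges G \<union> (\<lambda>x. {c, x}) ` (insert v L)) z = open_nbhd G z"
    and "open_nbhd (verts G \<union> insert c L, edges G \<union> (\<lambda>x. {c, x}) ` (insert v L)) c = insert v L"
proof -
  have Z: "Z \<subseteq> verts G" using good_fin[OF assms(1)] by blast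
  show "z \<in> Z \<Longrightarrow> open_nbhd (verts G \<union> insert c L, edges G \<union> (\<lambda>x. {c, x}) ` (insert v L)) z = open_nbhd G z"
    unfolding open_nbhd_def using assms Z good_adj[OF assms(1)]
    by (subst adj_step) auto
  show "open_nbhd (verts G \<union> insert c L, edges G \<union> (\<lambda>x. {c, x}) ` (insert v L)) c = insert v L"
    unfolding open_nbhd_def using assms Z good_adj[OF assms(1)]
    by (subst adj_step) auto
qed

lemma good_deg: "good G Z \<Longrightarrow> z \<in> Z \<Longrightarrow> card (open_nbhd G z) = 3"
proof (induction rule: good.induct)
  case (gbase L c)
  have "open_nbhd (star_graph c L) c = L" using gbase
    unfolding open_nbhd_def by (auto simp: adj_star)
  then show ?case using gbase by simp
next
  case (gstep G Z v c L)
  show ?case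
  proof (cases "z = c")
    case True
    have "v \<notin> L" using gstep.hyps by blast
    then show ?thesis unfolding True using gstep good_nbhd_step(2)[OF gstep.hyps(1-6)] \<open>v \<notin> L\<close>
      by (simp add: card_insert_if) 
  next
    case False
    then show ?thesis using gstep good_nbhd_step(1)[OF gstep.hyps(1-6)] by auto
  qed
qed


lemma good_rank: "good G Z \<Longrightarrow> \<exists>r::'a \<Rightarrow> nat. (\<forall>x y. adj G x y \<longrightarrow> r x \<noteq> r y) \<and>
   (\<forall>x y y'. adj G x y \<longrightarrow> adj G x y' \<longrightarrow> r y < r x \<longrightarrow> r y' < r x \<longrightarrow> y = y')"
proof (induction rule: good.induct)
  case (gbase L c)
  have cL: "c \<notin> L" using gbase.hyps by simp
  show ?case
    by (rule exI[of _ "\<lambda>x. if x = c then 0 else 1"]) (use cL in \<open>auto simp: adj_star[OF cL]\<close>)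
next
  case (gstep G Z v c L)
  then obtain r :: "'a \<Rightarrow> nat" where r1: "\<forall>x y. adj G x y \<longrightarrow> r x \<noteq> r y"
    and r2: "\<forall>x y y'. adj G x y \<longrightarrow> adj G x y' \<longrightarrow> r y < r x \<longrightarrow> r y' < r x \<longrightarrow> y = y'" by blast
  define N where "N = Suc (sum r (verts G))"
  have fin: "finite (verts G)" using good_fin[OF gstep.hyps(1)] by blast
  have rN: "x \<in> verts G \<Longrightarrow> r x < N" for x
    unfolding N_def using member_le_sum[OF _ _ fin, of x r] by auto
  define r' where "r' = (\<lambda>x. if x \<in> verts G then r x else if x = c then N else Suc N)"
  have av: "adj G x y \<Longrightarrow> x \<in> verts G \<and> y \<in> verts G" for x y
    using good_adj[OF gstep.hyps(1)] by blast
  have L: "x \<in> L \<Longrightarrow> x \<notin> verts G" for x using gstep.hyps by blast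
  let ?G = "(verts G \<union> insert c L, edges G \<union> (\<lambda>x. {c, x}) ` (insert v L))"
  have A: "adj ?G x y \<longleftrightarrow> adj G x y \<or> (x = c \<and> y \<in> insert v L) \<or> (y = c \<and> x \<in> insert v L)" for x y
    using adj_step[OF gstep.hyps(4,5,2)] .
  have cV: "c \<notin> verts G" using gstep.hyps by blast
  have r'V: "x \<in> verts G \<Longrightarrow> r' x = r x" for x unfolding r'_def by simp
  have r'c: "r' c = N" unfolding r'_def using cV by simp
  have r'L: "x \<in> L \<Longrightarrow> r' x = Suc N" for x unfolding r'_def using L gstep.hyps(5) by auto
  have vV: "v \<in> verts G" by fact
  have P1: "r' x \<noteq> r' y" if "adj ?G x y" for x y
  proof -
    have rv: "r' v < N" using rN[OF vV] r'V[OF vV] by simp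
    have "adj G x y \<or> (x = c \<and> y \<in> insert v L) \<or> (y = c \<and> x \<in> insert v L)"
      using A[of x y] that by simp
    then consider "adj G x y" | "x = c" "y = v" | "x = c" "y \<in> L" | "y = c" "x = v" | "y = c" "x \<in> L"
      by blast
    then show ?thesis
    proof cases
      case 1
      then have "x \<in> verts G" "y \<in> verts G" "r x \<noteq> r y" using r1 av by blast+
      then show ?thesis using r'V by simp
    next
      case 2
      then show ?thesis using rv r'c by simp
    next
      case 3
      then show ?thesis using r'L[OF 3(2)] r'c by simp
    next
      case 4
      then show ?thesis using rv r'c by simp
    next
      case 5
      then show ?thesis using r'L[OF 5(2)] r'c by simp
    qed
  qed
  have E: "(x \<in> verts G \<and> adj G x y) \<or> (x = c \<and> y = v) \<or> (x \<in> L \<and> y = c)"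
    if "adj ?G x y" "r' y < r' x" for x y
  proof -
    have "adj G x y \<or> (x = c \<and> y \<in> insert v L) \<or> (y = c \<and> x \<in> insert v L)"
      using A[of x y] that by simp
    then consider "adj G x y" | "x = c \<and> y \<in> insert v L" | "y = c \<and> x \<in> insert v L" by blast
    then show ?thesis
    proof cases
      case 1
      then show ?thesis using av[OF 1] by auto
    next
      case 2
      then show ?thesis using that(2) rN[OF vV] r'V[OF vV] r'c r'L by auto
    next
      case 3
      then show ?thesis using that(2) rN[OF vV] r'V[OF vV] r'c r'L by auto
    qed
  qed
  have P2: "y = y'" if "adj ?G x y" "adj ?G x y'" "r' y < r' x" "r' y' < r' x" for x y y'
  proof -
    have e1: "(x \<in> verts G \<and> adj G x y) \<or> (x = c \<and> y = v) \<or> (x \<in> L \<and> y = c)" using E that by blast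
    have e2: "(x \<in> verts G \<and> adj G x y') \<or> (x = c \<and> y' = v) \<or> (x \<in> L \<and> y' = c)" using E that by blast
    show ?thesis
    proof (cases "x \<in> verts G")
      case True
      then have "adj G x y" "adj G x y'" using e1 e2 cV L by auto
      moreover have "r y < r x" "r y' < r x" using that(3,4) av[OF calculation(1)] av[OF calculation(2)]
        r'V by auto
      ultimately show ?thesis using r2 by blast
    next
      case False
      then show ?thesis using e1 e2 cV L gstep.hyps by auto
    qed
  qed
  show ?case using P1 P2 by blast
qed

lemma good_conn: "good G Z \<Longrightarrow> x \<in> verts G \<Longrightarrow> y \<in> verts G \<Longrightarrow> (x, y) \<in> (adj_rel G)\<^sup>*"
proof (induction arbitrary: x y rule: good.induct)
  case (gbase L c)
  have cL: "c \<notin> L" using gbase.hyps by simp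
  have st: "(u, c) \<in> adj_rel (star_graph c L) \<and> (c, u) \<in> adj_rel (star_graph c L)"
    if "u \<in> L" for u
    using that cL by (auto simp: adj_rel_def adj_star[OF cL])
  have "(u, c) \<in> (adj_rel (star_graph c L))\<^sup>* \<and> (c, u) \<in> (adj_rel (star_graph c L))\<^sup>*"
    if "u \<in> insert c L" for u
    using that st[of u] by (cases "u = c") auto
  then show ?case using gbase.prems unfolding verts_star by (meson rtrancl_trans)
next
  case (gstep G Z v c L)
  let ?G = "(verts G \<union> insert c L, edges G \<union> (\<lambda>x. {c, x}) ` (insert v L))"
  have sub: "adj_rel G \<subseteq> adj_rel ?G"
    unfolding adj_rel_def using adj_step[OF gstep.hyps(4,5,2)] by auto
  have vc: "(v, c) \<in> adj_rel ?G" "(c, v) \<in> adj_rel ?G"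
    unfolding adj_rel_def using adj_step[OF gstep.hyps(4,5,2)] gstep.hyps by auto
  have cl: "(l, c) \<in> adj_rel ?G" "(c, l) \<in> adj_rel ?G" if "l \<in> L" for l
    unfolding adj_rel_def using adj_step[OF gstep.hyps(4,5,2)] gstep.hyps that by auto
  have both: "(u, v) \<in> (adj_rel ?G)\<^sup>* \<and> (v, u) \<in> (adj_rel ?G)\<^sup>*" if u: "u \<in> verts ?G" for u
  proof -
    consider "u \<in> verts G" | "u = c" | "u \<in> L" using u by auto
    then show ?thesis
    proof cases
      case 1
      then show ?thesis using gstep.IH[of u v] gstep.IH[of v u] gstep.hyps(2) rtrancl_mono[OF sub] by blast
    next
      case 2
      then show ?thesis using vc by blast
    next
      case 3
      then show ?thesis using vc cl[OF 3] by (meson converse_rtrancl_into_rtrancl r_into_rtrancl rtrancl_into_rtrancl)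
    qed
  qed
  show ?case using both[OF gstep.prems(1)] both[OF gstep.prems(2)] by (meson rtrancl_trans)
qed

lemma app_fin: "appended_star G \<Longrightarrow> finite (verts G)"
  by (induction rule: appended_star.induct) (auto simp: star_graph_def verts_def)

lemma app_good: "appended_star G \<Longrightarrow> max_degree G \<le> 3 \<Longrightarrow> \<exists>Z. good G Z"
proof (induction rule: appended_star.induct)
  case (base L c)
  have cL: "c \<notin> L" using base.hyps by simp
  have nb: "open_nbhd (star_graph c L) c = L"
    unfolding open_nbhd_def verts_star adj_star[OF cL] using cL by auto
  have "degree (star_graph c L) c \<le> Max (degree (star_graph c L) ` verts (star_graph c L))"
    using base.hyps(1) by (intro Max_ge) auto
  moreover have "degree (star_graph c L) c = card L" by (simp add: degree_def nb)
  ultimately have "card L \<le> max_degree (star_graph c L)" unfolding max_degree_def by simp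
  then have "card L \<le> 3" using base.prems by linarith
  then have c3: "card L = 3" using base.hyps(2) by linarith
  have "good (star_graph c L) {c}" by (rule gbase[OF base.hyps(1) c3 cL])
  then show ?case by blast
next
  case (step G v c L)
  let ?G = "(verts G \<union> insert c L, edges G \<union> (\<lambda>x. {c, x}) ` (insert v L))"
  have A: "adj ?G x y \<longleftrightarrow> adj G x y \<or> (x = c \<and> y \<in> insert v L) \<or> (y = c \<and> x \<in> insert v L)" for x y
    using adj_step[OF step.hyps(3,4,2)] .
  have finG: "finite (verts ?G)" using app_fin[OF step.hyps(1)] step.hyps by simp
  have dle: "degree ?G x \<le> 3" if "x \<in> verts ?G" for x
  proof -
    have "degree ?G x \<le> Max (degree ?G ` verts ?G)"
      using finG that by (intro Max_ge) auto
    then show ?thesis using step.prems unfolding max_degree_def by simp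
  qed
  have sub: "open_nbhd G x \<subseteq> open_nbhd ?G x" for x
  proof
    fix u assume "u \<in> open_nbhd G x"
    then have "u \<in> verts G" "adj G x u" unfolding open_nbhd_def by auto
    then show "u \<in> open_nbhd ?G x" unfolding open_nbhd_def using A[of x u] by simp
  qed
  have finN: "finite (open_nbhd ?G x)" for x using finG unfolding open_nbhd_def by simp
  have "degree G x \<le> 3" if "x \<in> verts G" for x
  proof -
    have "x \<in> verts ?G" using that by simp
    then show ?thesis using dle[of x] card_mono[OF finN sub[of x]] by (simp add: degree_def)
  qed
  then have "max_degree G \<le> 3" unfolding max_degree_def
    using app_fin[OF step.hyps(1)] step.hyps(2) by (subst Max_le_iff) auto
  then obtain Z where gZ: "good G Z" using step.IH by blast
  have cV: "c \<notin> verts G" by fact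
  have nc: "open_nbhd ?G c = insert v L"
  proof -
    have "adj ?G c u \<longleftrightarrow> u \<in> insert v L" for u
    proof -
      have "\<not> adj G c u" using good_adj[OF gZ, of c u] cV by blast
      moreover have "c \<notin> insert v L" using step.hyps by blast
      ultimately show ?thesis using A[of c u] by blast
    qed
    then show ?thesis unfolding open_nbhd_def using step.hyps(2) by auto
  qed
  have vL: "v \<notin> L" using step.hyps by blast
  have "card (insert v L) \<le> 3" using dle[of c] nc by (simp add: degree_def)
  then have cL: "card L = 2" using step.hyps(7) vL step.hyps(6) by simp
  have vZ: "v \<notin> Z"
  proof
    assume "v \<in> Z"
    then have "card (open_nbhd G v) = 3" using good_deg[OF gZ] by blast
    moreover have "c \<in> open_nbhd ?G v" unfolding open_nbhd_def using A[of v c] by simp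
    then have "insert c (open_nbhd G v) \<subseteq> open_nbhd ?G v"
      using sub[of v] by blast
    moreover have "c \<notin> open_nbhd G v" using cV unfolding open_nbhd_def by auto
    moreover have "finite (open_nbhd G v)" using app_fin[OF step.hyps(1)] unfolding open_nbhd_def by simp
    ultimately have "card (insert c (open_nbhd G v)) \<le> degree ?G v" "card (insert c (open_nbhd G v)) = 4"
      unfolding degree_def using card_mono[OF finN] by (blast, simp)
    then have "4 \<le> degree ?G v" by simp
    then show False using dle[of v] step.hyps(2) by simp
  qed
  show ?case using gstep[OF gZ step.hyps(2) vZ step.hyps(3,4,5,6) cL] by blast
qed

lemma no_cycle:
  fixes r :: "'a \<Rightarrow> nat"
  assumes r1: "\<forall>x y. adj G x y \<longrightarrow> r x \<noteq> r y"
    and r2: "\<forall>x y y'. adj G x y \<longrightarrow> adj G x y' \<longrightarrow> r y < r x \<longrightarrow> r y' < r x \<longrightarrow> y = y'"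
    and d: "distinct xs" and l: "3 \<le> length xs"
    and a: "\<forall>i < length xs. adj G (xs!i) (xs!(Suc i mod length xs))"
  shows False
proof -
  let ?n = "length xs"
  let ?S = "(\<lambda>i. r (xs!i)) ` {..<?n}"
  have n0: "0 < ?n" using l by linarith
  then have "0 \<in> {..<?n}" by simp
  then have "Max ?S \<in> ?S" by (intro Max_in) blast+
  then obtain m where m: "m < ?n" "r (xs!m) = Max ?S" by auto
  have mx: "r (xs!i) \<le> r (xs!m)" if "i < ?n" for i
    using m(2) that by (simp add: Max_ge)
  define a where "a = Suc m mod ?n"
  define b where "b = (if m = 0 then ?n - 1 else m - 1)"
  have an: "a < ?n" unfolding a_def using n0 by simp
  have bn: "b < ?n" unfolding b_def using l m by auto
  have ab: "a \<noteq> b" "a \<noteq> m" "b \<noteq> m"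
  proof -
    have "(Suc m < ?n \<and> a = Suc m) \<or> (Suc m = ?n \<and> a = 0)"
    proof (cases "Suc m < ?n")
      case False
      then have "Suc m = ?n" using m(1) by simp
      then show ?thesis unfolding a_def by simp
    qed (simp add: a_def)
    then show "a \<noteq> b" "a \<noteq> m" "b \<noteq> m" unfolding b_def using l m(1) by auto
  qed
  have sb: "Suc b mod ?n = m" unfolding b_def using l m by auto
  have adj1: "adj G (xs!m) (xs!a)" using a m(1) unfolding a_def by blast
  have "adj G (xs!b) (xs!m)" using a[rule_format, OF bn] sb by simp
  then have adj2: "adj G (xs!m) (xs!b)" by (rule adj_sym)
  have "r (xs!a) < r (xs!m)" using mx[OF an] r1 adj1 by (metis order_le_less)
  moreover have "r (xs!b) < r (xs!m)" using mx[OF bn] r1 adj2 by (metis order_le_less)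
  ultimately have "xs!a = xs!b" using r2 adj1 adj2 by blast
  then have "a = b" using d an bn by (simp add: nth_eq_iff_index_eq)
  then show False using ab by simp
qed

lemma cyc4:
  fixes r :: "'a \<Rightarrow> nat"
  assumes r1: "\<forall>x y. adj G x y \<longrightarrow> r x \<noteq> r y"
    and r2: "\<forall>x y y'. adj G x y \<longrightarrow> adj G x y' \<longrightarrow> r y < r x \<longrightarrow> r y' < r x \<longrightarrow> y = y'"
    and "distinct [x1,x2,x3,x4]" "adj G x1 x2" "adj G x2 x3" "adj G x3 x4" "adj G x4 x1"
  shows False
proof (rule no_cycle[OF r1 r2 assms(3)])
  show "\<forall>i<length [x1,x2,x3,x4]. adj G ([x1,x2,x3,x4] ! i) ([x1,x2,x3,x4] ! (Suc i mod length [x1,x2,x3,x4]))"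
  proof (intro allI impI)
    fix i assume "i < length [x1,x2,x3,x4]"
    then have "i = 0 \<or> i = 1 \<or> i = 2 \<or> i = 3" by auto
    then show "adj G ([x1,x2,x3,x4] ! i) ([x1,x2,x3,x4] ! (Suc i mod length [x1,x2,x3,x4]))"
      using assms(4-) by auto
  qed
qed simp

lemma cyc8:
  fixes r :: "'a \<Rightarrow> nat"
  assumes r1: "\<forall>x y. adj G x y \<longrightarrow> r x \<noteq> r y"
    and r2: "\<forall>x y y'. adj G x y \<longrightarrow> adj G x y' \<longrightarrow> r y < r x \<longrightarrow> r y' < r x \<longrightarrow> y = y'"
    and "distinct [x1,x2,x3,x4,x5,x6,x7,x8]" "adj G x1 x2" "adj G x2 x3" "adj G x3 x4" "adj G x4 x5"
      "adj G x5 x6" "adj G x6 x7" "adj G x7 x8" "adj G x8 x1"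
  shows False
proof (rule no_cycle[OF r1 r2 assms(3)])
  let ?l = "[x1,x2,x3,x4,x5,x6,x7,x8]"
  show "\<forall>i<length ?l. adj G (?l ! i) (?l ! (Suc i mod length ?l))"
  proof (intro allI impI)
    fix i assume "i < length ?l"
    then have "i = 0 \<or> i = 1 \<or> i = 2 \<or> i = 3 \<or> i = 4 \<or> i = 5 \<or> i = 6 \<or> i = 7" by auto
    then show "adj G (?l ! i) (?l ! (Suc i mod length ?l))"
      using assms(4-) by auto
  qed
qed simp
lemma cyc6:
  fixes r :: "'a \<Rightarrow> nat"
  assumes r1: "\<forall>x y. adj G x y \<longrightarrow> r x \<noteq> r y"
    and r2: "\<forall>x y y'. adj G x y \<longrightarrow> adj G x y' \<longrightarrow> r y < r x \<longrightarrow> r y' < r x \<longrightarrow> y = y'"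
    and "distinct [x1,x2,x3,x4,x5,x6]" "adj G x1 x2" "adj G x2 x3" "adj G x3 x4" "adj G x4 x5"
      "adj G x5 x6" "adj G x6 x1"
  shows False
proof (rule no_cycle[OF r1 r2 assms(3)])
  let ?l = "[x1,x2,x3,x4,x5,x6]"
  show "\<forall>i<length ?l. adj G (?l ! i) (?l ! (Suc i mod length ?l))"
  proof (intro allI impI)
    fix i assume "i < length ?l"
    then have "i = 0 \<or> i = 1 \<or> i = 2 \<or> i = 3 \<or> i = 4 \<or> i = 5" by auto
    then show "adj G (?l ! i) (?l ! (Suc i mod length ?l))"
      using assms(4-) by auto
  qed
qed simp

lemma three2: "card A = 3 \<Longrightarrow> a \<in> A \<Longrightarrow> b \<in> A \<Longrightarrow> a \<noteq> b \<Longrightarrow> \<exists>c. A = {a, b, c} \<and> c \<noteq> a \<and> c \<noteq> b"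
proof -
  assume h: "card A = 3" "a \<in> A" "b \<in> A" "a \<noteq> b"
  then have "card (A - {a, b}) = 1" by (simp add: card_Diff_subset)
  then obtain c where c: "A - {a, b} = {c}" by (meson card_1_singletonE)
  then have "A = {a, b, c}" using h(2,3) by blast
  moreover have "c \<noteq> a" "c \<noteq> b" using c by blast+
  ultimately show ?thesis by blast
qed

lemma three1: "card A = 3 \<Longrightarrow> a \<in> A \<Longrightarrow> \<exists>b c. A = {a, b, c} \<and> b \<noteq> a \<and> c \<noteq> a \<and> b \<noteq> c"
proof -
  assume h: "card A = 3" "a \<in> A"
  then have "card (A - {a}) = 2" by simp
  then obtain b c where bc: "A - {a} = {b, c}" "b \<noteq> c" by (meson card_2_iff)
  then have "A = {a, b, c}" using h(2) by blast
  moreover have "b \<noteq> a" "c \<noteq> a" using bc by blast+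
  ultimately show ?thesis using bc(2) by blast
qed

lemma rel2: "(x, y) \<in> R \<Longrightarrow> (y, w) \<in> R \<Longrightarrow> (x, w) \<in> R ^^ 2"
  unfolding numeral_2_eq_2 by auto

lemma rel4: "(x, y) \<in> R \<Longrightarrow> (y, w) \<in> R \<Longrightarrow> (w, u) \<in> R \<Longrightarrow> (u, t) \<in> R \<Longrightarrow> (x, t) \<in> R ^^ 4"
proof -
  assume "(x, y) \<in> R" "(y, w) \<in> R" "(w, u) \<in> R" "(u, t) \<in> R"
  then have "(x, w) \<in> R ^^ 2" "(w, t) \<in> R ^^ 2" using rel2 by metis+
  then have "(x, t) \<in> R ^^ 2 O R ^^ 2" by blast
  then have "(x, t) \<in> R ^^ (2 + 2)" by (simp only: relpow_add)
  then show ?thesis by (simp only: numeral_Bit0 numeral_One one_plus_numeral)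
qed

lemma adj_irr: "adj G x y \<Longrightarrow> x \<noteq> y" by (simp add: adj_def)

lemma core:
  fixes G :: "'a graph" and g :: "nat \<Rightarrow> 'a"
  assumes gZ: "good G Z"
    and path: "\<And>t. t < 6 \<Longrightarrow> adj G (g t) (g (Suc t))"
    and cen: "g 0 \<in> Z"
    and mn: "\<And>a b m. a \<le> b \<Longrightarrow> b \<le> 6 \<Longrightarrow> (g a, g b) \<in> adj_rel G ^^ m \<Longrightarrow> b - a \<le> m"
  shows "\<exists>C. is_identifying_code G C \<and> 3 * card C \<le> 2 * card (verts G)"
proof -
  obtain r :: "'a \<Rightarrow> nat" where r1: "\<forall>x y. adj G x y \<longrightarrow> r x \<noteq> r y"
    and r2: "\<forall>x y y'. adj G x y \<longrightarrow> adj G x y' \<longrightarrow> r y < r x \<longrightarrow> r y' < r x \<longrightarrow> y = y'"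
    using good_rank[OF gZ] by blast
  note C4 = cyc4[OF r1 r2] and C6 = cyc6[OF r1 r2] and C8 = cyc8[OF r1 r2]
  let ?V = "verts G"
  have bip: "adj G x y \<Longrightarrow> x \<in> ?V \<and> y \<in> ?V \<and> (x \<in> Z \<longleftrightarrow> y \<notin> Z)" for x y
    using good_adj[OF gZ] by blast
  have sym: "adj G x y \<Longrightarrow> adj G y x" for x y by (rule adj_sym)
  have R1: "adj G x y \<Longrightarrow> (x, y) \<in> adj_rel G" for x y using bip unfolding adj_rel_def by blast
  have F2: "False" if "z1 \<noteq> z2" "a \<noteq> b" "adj G z1 a" "adj G z1 b" "adj G z2 a" "adj G z2 b" for z1 z2 a b
  proof -
    have "distinct [z1, a, z2, b]" using that adj_irr[of G] by auto
    then show False using C4[of z1 a z2 b] that sym by blast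
  qed
  define s1 where "s1 = g 0"
  define i1 where "i1 = g 1"
  define s2 where "s2 = g 2"
  define i2 where "i2 = g 3"
  define s3 where "s3 = g 4"
  define i3 where "i3 = g 5"
  define s4 where "s4 = g 6"
  have a1: "adj G s1 i1" using path[of 0] unfolding s1_def i1_def by simp
  have a2: "adj G i1 s2" using path[of 1] unfolding s2_def i1_def by (simp add: numeral_2_eq_2)
  have a3: "adj G s2 i2" using path[of 2] unfolding s2_def i2_def by (simp add: numeral_3_eq_3 numeral_2_eq_2)
  have a4: "adj G i2 s3" using path[of 3] unfolding s3_def i2_def by (simp add: numeral_3_eq_3 numeral_eq_Suc)
  have a5: "adj G s3 i3" using path[of 4] unfolding s3_def i3_def by (simp add: numeral_eq_Suc)
  have a6: "adj G i3 s4" using path[of 5] unfolding s4_def i3_def by (simp add: numeral_eq_Suc)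
  have Zs: "s1 \<in> Z" "i1 \<notin> Z" "s2 \<in> Z" "i2 \<notin> Z" "s3 \<in> Z" "i3 \<notin> Z" "s4 \<in> Z"
    using cen bip[OF a1] bip[OF a2] bip[OF a3] bip[OF a4] bip[OF a5] bip[OF a6] unfolding s1_def by blast+
  have Vs: "s1 \<in> ?V" "i1 \<in> ?V" "s2 \<in> ?V" "i2 \<in> ?V" "s3 \<in> ?V" "i3 \<in> ?V" "s4 \<in> ?V"
    using bip[OF a1] bip[OF a2] bip[OF a3] bip[OF a4] bip[OF a5] bip[OF a6] by blast+
  have m0: "g a \<noteq> g b" if "a < b" "b \<le> 6" for a b
  proof
    assume "g a = g b"
    then have "(g a, g b) \<in> adj_rel G ^^ 0" by simp
    then show False using mn[of a b 0] that by simp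
  qed
  have m1: "\<not> adj G (g a) (g b)" if "a + 1 < b" "b \<le> 6" for a b
  proof
    assume "adj G (g a) (g b)"
    then have "(g a, g b) \<in> adj_rel G ^^ 1" using R1 by simp
    then show False using mn[of a b 1] that by simp
  qed
  have m2: "\<not> (adj G (g a) x \<and> adj G x (g b))" if "a + 2 < b" "b \<le> 6" for a b x
  proof
    assume "adj G (g a) x \<and> adj G x (g b)"
    then have "(g a, g b) \<in> adj_rel G ^^ 2" using R1 rel2 by metis
    then show False using mn[of a b 2] that by simp
  qed
  have ds: "s1 \<noteq> s2" "s1 \<noteq> s3" "s1 \<noteq> s4" "s2 \<noteq> s3" "s2 \<noteq> s4" "s3 \<noteq> s4"
    "i1 \<noteq> i2" "i1 \<noteq> i3" "i2 \<noteq> i3"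
    unfolding s1_def s2_def s3_def s4_def i1_def i2_def i3_def by (simp_all add: m0)
  have na: "\<not> adj G s1 i2" "\<not> adj G s1 i3" "\<not> adj G s2 i3" "\<not> adj G i1 s3" "\<not> adj G i1 s4" "\<not> adj G i2 s4"
    unfolding s1_def s2_def s3_def s4_def i1_def i2_def i3_def by (simp_all add: m1)
  have nc: "\<not> (adj G s1 x \<and> adj G x s3)" "\<not> (adj G s1 x \<and> adj G x s4)" "\<not> (adj G s2 x \<and> adj G x s4)" for x
    unfolding s1_def s2_def s3_def s4_def by (simp_all add: m2)
  let ?N = "open_nbhd G"
  have inN: "y \<in> ?N x \<longleftrightarrow> adj G x y" for x y unfolding open_nbhd_def using bip by blast
  have c3: "card (?N s) = 3" if "s \<in> Z" for s using good_deg[OF gZ that] .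
  obtain p1 q1 where N1: "?N s1 = {i1, p1, q1}" "p1 \<noteq> i1" "q1 \<noteq> i1" "p1 \<noteq> q1"
    using three1[OF c3[OF Zs(1)], of i1] inN a1 by blast
  obtain p2 where N2: "?N s2 = {i1, i2, p2}" "p2 \<noteq> i1" "p2 \<noteq> i2"
    using three2[OF c3[OF Zs(3)], of i1 i2] inN a3 sym[OF a2] ds by blast
  obtain p3 where N3: "?N s3 = {i2, i3, p3}" "p3 \<noteq> i2" "p3 \<noteq> i3"
    using three2[OF c3[OF Zs(5)], of i2 i3] inN a5 sym[OF a4] ds by blast
  obtain p4 q4 where N4: "?N s4 = {i3, p4, q4}" "p4 \<noteq> i3" "q4 \<noteq> i3" "p4 \<noteq> q4"
    using three1[OF c3[OF Zs(7)], of i3] inN sym[OF a6] by blast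
  have ap: "adj G s1 p1" "adj G s1 q1" "adj G s2 p2" "adj G s3 p3" "adj G s4 p4" "adj G s4 q4"
    using N1 N2 N3 N4 inN by blast+
  have Zp: "p1 \<notin> Z" "q1 \<notin> Z" "p2 \<notin> Z" "p3 \<notin> Z" "p4 \<notin> Z" "q4 \<notin> Z"
    and Vp: "p1 \<in> ?V" "q1 \<in> ?V" "p2 \<in> ?V" "p3 \<in> ?V" "p4 \<in> ?V" "q4 \<in> ?V"
    using ap bip Zs by blast+
  have adjN: "adj G s x \<longleftrightarrow> x \<in> ?N s" for s x using inN by simp
  have d1: "p1 \<noteq> i2" "q1 \<noteq> i2" "p1 \<noteq> i3" "q1 \<noteq> i3" using ap na by metis+
  have d2: "p1 \<noteq> p2" "q1 \<noteq> p2"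
    using F2[OF ds(1) N1(2)[symmetric]] F2[OF ds(1) N1(3)[symmetric]] a1 sym[OF a2] ap by metis+
  have d3: "p1 \<noteq> p3" "q1 \<noteq> p3" "p1 \<noteq> p4" "q1 \<noteq> p4" "p1 \<noteq> q4" "q1 \<noteq> q4" "p2 \<noteq> p4" "p2 \<noteq> q4"
    using nc ap sym by metis+
  have d4: "p2 \<noteq> i3" "p3 \<noteq> i1" "p4 \<noteq> i1" "q4 \<noteq> i1" "p4 \<noteq> i2" "q4 \<noteq> i2"
    using ap na sym by metis+
  have d5: "p2 \<noteq> p3" using F2[OF ds(4) N2(3)[symmetric]] a3 sym[OF a4] ap by metis
  have d6: "p3 \<noteq> p4" "p3 \<noteq> q4" using F2[OF ds(6) N3(3)[symmetric]] a5 sym[OF a6] ap by metis+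
  note DD = ds d1 d2 d3 d4 d5 d6 N1(2-4) N2(2-3) N3(2-3) N4(2-4)
  define S where "S = {s1, s2, s3, s4}"
  define R where "R = {p1, p2, i2, p3, p4}"
  have F3pair: False if z: "z \<in> Z" "z \<notin> S" and ab: "a \<in> R" "b \<in> R" "a \<noteq> b" "adj G z a" "adj G z b" for z a b
  proof -
    have zs: "z \<noteq> s1" "z \<noteq> s2" "z \<noteq> s3" "z \<noteq> s4" using z unfolding S_def by auto
    have zw: "z \<noteq> i1" "z \<noteq> i2" "z \<noteq> i3" "z \<noteq> p1" "z \<noteq> q1" "z \<noteq> p2" "z \<noteq> p3" "z \<noteq> p4" "z \<noteq> q4"
      using z Zs Zp by auto
    have sw: "s1 \<noteq> p1" "s1 \<noteq> i1" "s2 \<noteq> i1" "s2 \<noteq> p2" "s2 \<noteq> i2" "s1 \<noteq> i2" "s3 \<noteq> i2"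
       "s3 \<noteq> i3" "s3 \<noteq> p3" "s4 \<noteq> i3" "s4 \<noteq> p4" "s1 \<noteq> p2" "s1 \<noteq> p3" "s2 \<noteq> p1" "s2 \<noteq> p3"
       "s3 \<noteq> p1" "s3 \<noteq> p2" "s2 \<noteq> i3" "s2 \<noteq> p4" "s3 \<noteq> p4" "s4 \<noteq> p2" "s4 \<noteq> i2" "s3 \<noteq> i1" "s1 \<noteq> i3" "s4 \<noteq> p3"
       "s4 \<noteq> i1" "s1 \<noteq> p4"
      using Zs Zp by auto
    have P12: False if "adj G z p1" "adj G z p2"
      using C6[of z p1 s1 i1 s2 p2] that zs zw sw DD a1 a2 ap sym by auto
    have P1i: False if "adj G z p1" "adj G z i2"
      using C6[of z p1 s1 i1 s2 i2] that zs zw sw DD a1 a2 a3 ap sym by auto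
    have P13: False if "adj G z p1" "adj G z p3"
      using C8[of z p1 s1 i1 s2 i2 s3 p3] that zs zw sw DD a1 a2 a3 a4 ap sym by auto
    have P14: False if "adj G z p1" "adj G z p4"
    proof -
      have "(s1, s4) \<in> adj_rel G ^^ 4"
        using rel4[OF R1[OF ap(1)] R1[OF sym[OF that(1)]] R1[OF that(2)] R1[OF sym[OF ap(5)]]] .
      then show False using mn[of 0 6 4] unfolding s1_def s4_def by simp
    qed
    have P2i: False if "adj G z p2" "adj G z i2"
      using F2[of z s2 p2 i2] that zs DD a3 ap by blast
    have P23: False if "adj G z p2" "adj G z p3"
      using C6[of z p2 s2 i2 s3 p3] that zs zw sw DD a3 a4 ap sym by auto
    have P24: False if "adj G z p2" "adj G z p4"
      using C8[of z p2 s2 i2 s3 i3 s4 p4] that zs zw sw DD a3 a4 a5 a6 ap sym by auto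
    have Pi3: False if "adj G z i2" "adj G z p3"
      using F2[of z s3 i2 p3] that zs DD sym[OF a4] ap by blast
    have Pi4: False if "adj G z i2" "adj G z p4"
      using C6[of z i2 s3 i3 s4 p4] that zs zw sw DD a4 a5 a6 ap sym by auto
    have P34: False if "adj G z p3" "adj G z p4"
      using C6[of z p3 s3 i3 s4 p4] that zs zw sw DD a5 a6 ap sym by auto
    show False using ab unfolding R_def
      using P12 P1i P13 P14 P2i P23 P24 Pi3 Pi4 P34 by blast
  qed
  have F3: "\<exists>a b. a \<noteq> b \<and> adj G z a \<and> adj G z b \<and> a \<notin> R \<and> b \<notin> R" if z: "z \<in> Z" "z \<notin> S" for z
  proof -
    obtain x y w where xyw: "?N z = {x, y, w}" "x \<noteq> y" "y \<noteq> w" "x \<noteq> w"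
      using c3[OF z(1)] card_3_iff by metis
    then have ad: "adj G z x" "adj G z y" "adj G z w" using inN by blast+
    show ?thesis
    proof (cases "x \<in> R")
      case True
      then have "y \<notin> R" "w \<notin> R" using F3pair[OF z] ad xyw by metis+
      then show ?thesis using ad xyw by blast
    next
      case False
      show ?thesis
      proof (cases "y \<in> R")
        case True
        then have "w \<notin> R" using F3pair[OF z] ad xyw by metis
        then show ?thesis using ad xyw False by blast
      next
        case False2: False
        then show ?thesis using ad xyw False by blast
      qed
    qed
  qed
  define C where "C = (?V - Z - R) \<union> S"
  have finV: "finite ?V" and ZV: "Z \<subseteq> ?V" and cardV: "card ?V = 3 * card Z + 1"
    using good_fin[OF gZ] by auto
  have RW: "R \<subseteq> ?V - Z" unfolding R_def using Vp Vs Zp Zs by auto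
  have SZ: "S \<subseteq> Z" unfolding S_def using Zs by auto
  have cR: "card R = 5" unfolding R_def using DD d1 by auto
  have cS: "card S = 4" unfolding S_def using ds by auto
  have cW: "card (?V - Z) = 2 * card Z + 1" using cardV card_Diff_subset[OF finite_subset[OF ZV finV] ZV] by simp
  have "card R \<le> card (?V - Z)" using RW finV by (intro card_mono) auto
  have cWR: "card (?V - Z - R) = card (?V - Z) - 5"
    using card_Diff_subset[OF finite_subset[OF RW] RW] finV cR by simp
  have "card C = card (?V - Z - R) + card S" unfolding C_def
    using SZ finV finite_subset[OF SZ finite_subset[OF ZV finV]] by (intro card_Un_disjoint) auto
  then have cardC: "3 * card C \<le> 2 * card ?V" using cW cWR cS cardV \<open>card R \<le> card (?V - Z)\<close> cR by simp
  let ?K = "\<lambda>x. closed_nbhd G x \<inter> C"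
  have memC: "y \<in> C \<longleftrightarrow> (y \<in> ?V \<and> y \<notin> Z \<and> y \<notin> R) \<or> y \<in> S" for y unfolding C_def by auto
  have memK: "y \<in> ?K x \<longleftrightarrow> (y = x \<or> adj G x y) \<and> y \<in> C" for x y
    unfolding closed_nbhd_def using inN by auto
  have Wsub: "y = x" if "x \<notin> Z" "y \<in> ?K x" "y \<notin> Z" for x y using that memK bip by blast
  have Zsub: "y = x" if "x \<in> Z" "y \<in> ?K x" "y \<in> Z" for x y using that memK bip by blast
  have SC: "S \<subseteq> C" unfolding C_def by auto
  have inC: "y \<in> C" if "y \<in> ?V" "y \<notin> Z" "y \<notin> R" for y using that memC by blast
  have dom: "?K x \<noteq> {}" if x: "x \<in> ?V" for x
  proof (cases "x \<in> Z")
    case True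
    show ?thesis
    proof (cases "x \<in> S")
      case True
      then show ?thesis using SC memK by blast
    next
      case False
      then obtain a where "adj G x a" "a \<notin> R" using F3[OF \<open>x \<in> Z\<close>] by blast
      moreover then have "a \<in> ?V" "a \<notin> Z" using bip \<open>x \<in> Z\<close> by blast+
      ultimately have "a \<in> ?K x" using inC memK by blast
      then show ?thesis by blast
    qed
  next
    case False
    show ?thesis
    proof (cases "x \<in> R")
      case False
      then have "x \<in> ?K x" using inC memK x \<open>x \<notin> Z\<close> by blast
      then show ?thesis by blast
    next
      case True
      then have "\<exists>s\<in>S. adj G x s" unfolding R_def S_def using ap a3 sym by blast
      then show ?thesis using SC memK by blast
    qed
  qed
  have RR: "\<exists>s\<in>S. (u \<in> ?N s) \<noteq> (v \<in> ?N s)" if "u \<in> R" "v \<in> R" "u \<noteq> v" for u v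
  proof -
    have T1: "p1 \<in> ?N s1" "p2 \<notin> ?N s1" "i2 \<notin> ?N s1" "p3 \<notin> ?N s1" "p4 \<notin> ?N s1"
      unfolding N1(1) using DD d1 d2 d3 d4 d5 d6 by auto
    have T4: "p4 \<in> ?N s4" "p2 \<notin> ?N s4" "i2 \<notin> ?N s4" "p3 \<notin> ?N s4" "p1 \<notin> ?N s4"
      unfolding N4(1) using DD d1 d2 d3 d4 d5 d6 by auto
    have T3: "i2 \<in> ?N s3" "p2 \<notin> ?N s3" unfolding N3(1) using DD d1 d2 d3 d4 d5 d6 by auto
    have T2: "p2 \<in> ?N s2" "i2 \<in> ?N s2" "p3 \<notin> ?N s2" unfolding N2(1) using DD d1 d2 d3 d4 d5 d6 by auto
    have S: "s1 \<in> S" "s2 \<in> S" "s3 \<in> S" "s4 \<in> S" unfolding S_def by auto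
    have "u = p1 \<or> u = p2 \<or> u = i2 \<or> u = p3 \<or> u = p4" "v = p1 \<or> v = p2 \<or> v = i2 \<or> v = p3 \<or> v = p4"
      using that unfolding R_def by auto
    then show ?thesis by (elim disjE) (use T1 T2 T3 T4 S that(3) in blast)+
  qed
  have mixed: False if uv: "u \<in> Z" "v \<notin> Z" "v \<in> ?V" "?K u = ?K v" for u v
  proof -
    have two: False if "a \<in> ?K u" "b \<in> ?K u" "a \<noteq> b" "a \<notin> Z" "b \<notin> Z" for a b
      using Wsub[of v a] Wsub[of v b] that uv by auto
    show False
    proof (cases "u \<in> S")
      case False
      then obtain a b where ab: "a \<noteq> b" "adj G u a" "adj G u b" "a \<notin> R" "b \<notin> R" using F3[OF uv(1)] by blast
      then have "a \<in> ?V" "a \<notin> Z" "b \<in> ?V" "b \<notin> Z" using bip uv(1) by blast+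
      then have "a \<in> ?K u" "b \<in> ?K u" using ab inC memK by blast+
      then show False using two ab \<open>a \<notin> Z\<close> \<open>b \<notin> Z\<close> by blast
    next
      case True
      then consider "u = s1" | "u = s2" | "u = s3" | "u = s4" unfolding S_def by blast
      then show False
      proof cases
        case 1
        have "i1 \<notin> R" "q1 \<notin> R" unfolding R_def using DD d1 d2 d3 d4 d5 d6 by auto
        then have "i1 \<in> ?K u" "q1 \<in> ?K u" using 1 a1 ap inC memK Vs Vp Zs Zp by blast+
        then show False using two N1 Zs Zp by blast
      next
        case 4
        have "i3 \<notin> R" "q4 \<notin> R" unfolding R_def using DD d1 d2 d3 d4 d5 d6 by auto
        then have "i3 \<in> ?K u" "q4 \<in> ?K u" using 4 sym[OF a6] ap inC memK Vs Vp Zs Zp by blast+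
        then show False using two N4 Zs Zp by blast
      next
        case 2
        have "i1 \<notin> R" unfolding R_def using DD d1 d2 d3 d4 d5 d6 by auto
        then have "i1 \<in> ?K u" using 2 sym[OF a2] inC memK Vs Zs by blast
        then have "v = i1" using Wsub[of v i1] uv Zs by auto
        moreover have "s1 \<in> ?K i1" using memK SC sym[OF a1] unfolding S_def by blast
        ultimately have "s1 \<in> ?K s2" using uv 2 by simp
        then show False using Zsub[of s2 s1] Zs ds by auto
      next
        case 3
        have "i3 \<notin> R" unfolding R_def using DD d1 d2 d3 d4 d5 d6 by auto
        then have "i3 \<in> ?K u" using 3 a5 inC memK Vs Zs by blast
        then have "v = i3" using Wsub[of v i3] uv Zs by auto
        moreover have "s4 \<in> ?K i3" using memK SC a6 unfolding S_def by blast
        ultimately have "s4 \<in> ?K s3" using uv 3 by simp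
        then show False using Zsub[of s3 s4] Zs ds by auto
      qed
    qed
  qed
  have sep: "?K u \<noteq> ?K v" if uv: "u \<in> ?V" "v \<in> ?V" "u \<noteq> v" for u v
  proof
    assume eq: "?K u = ?K v"
    consider "u \<in> Z" "v \<in> Z" | "u \<in> Z" "v \<notin> Z" | "u \<notin> Z" "v \<in> Z" | "u \<notin> Z" "v \<notin> Z" by blast
    then show False
    proof cases
      case 1
      show False
      proof (cases "u \<in> S \<or> v \<in> S")
        case True
        then show False using SC memK Zsub 1 eq uv(3) by blast
      next
        case False
        then obtain a b where ab: "a \<noteq> b" "adj G u a" "adj G u b" "a \<notin> R" "b \<notin> R" using F3[OF 1(1)] by blast
        then have "a \<in> ?V" "a \<notin> Z" "b \<in> ?V" "b \<notin> Z" using bip 1 by blast+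
        then have "a \<in> ?K v" "b \<in> ?K v" using ab inC memK eq by blast+
        then have "adj G v a" "adj G v b" using memK 1 \<open>a \<notin> Z\<close> \<open>b \<notin> Z\<close> by auto
        then show False using F2[OF uv(3) ab(1)] ab by blast
      qed
    next
      case 2
      then show False using mixed uv eq by blast
    next
      case 3
      then show False using mixed[of v u] uv eq by auto
    next
      case 4
      show False
      proof (cases "u \<in> R \<and> v \<in> R")
        case True
        then obtain s where s: "s \<in> S" "(u \<in> ?N s) \<noteq> (v \<in> ?N s)" using RR uv(3) by blast
        have "s \<noteq> u" "s \<noteq> v" using s(1) SZ 4 by auto
        then have "(s \<in> ?K u) = adj G u s" "(s \<in> ?K v) = adj G v s" using memK SC s(1) by auto
        moreover have "adj G u s = (u \<in> ?N s)" "adj G v s = (v \<in> ?N s)" using inN sym by blast+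
        ultimately show False using eq s(2) by simp
      next
        case False
        then show False using inC memK Wsub 4 uv eq by metis
      qed
    qed
  qed
  have "is_identifying_code G C"
    unfolding is_identifying_code_def using dom sep unfolding C_def using RW SZ ZV by auto
  then show ?thesis using cardC by blast
qed

theorem mainTheorem16:
  fixes G :: "'a graph"
  assumes "appended_star G"
    and "max_degree G = 3"
    and "diameter G \<ge> 8"
  shows "(\<exists>C. is_identifying_code G C)
         \<and> 3 * gamma_ID G \<le> 2 * card (verts G)"
proof -
  obtain Z where gZ: "good G Z" using app_good[OF assms(1)] assms(2) by auto
  let ?V = "verts G"
  let ?R = "adj_rel G"
  have finV: "finite ?V" and cardV: "card ?V = 3 * card Z + 1" using good_fin[OF gZ] by auto
  have Vne: "?V \<noteq> {}" using cardV by auto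
  let ?D = "{dist G u v | u v. u \<in> ?V \<and> v \<in> ?V}"
  have "?D = (\<lambda>(u, v). dist G u v) ` (?V \<times> ?V)" by auto
  then have finD: "finite ?D" using finV by simp
  have neD: "?D \<noteq> {}" using Vne by blast
  have "8 \<le> Max ?D" using assms(3) unfolding diameter_def .
  then obtain u v where uv: "u \<in> ?V" "v \<in> ?V" "8 \<le> dist G u v"
    using Max_ge_iff[OF finD neD] by blast
  define d where "d = dist G u v"
  have ex: "\<exists>k. (u, v) \<in> ?R ^^ k" using good_conn[OF gZ uv(1,2)] rtrancl_power by blast
  have dR: "(u, v) \<in> ?R ^^ d" unfolding d_def dist_def using LeastI_ex[OF ex] .
  have dmin: "(u, v) \<notin> ?R ^^ k" if "k < d" for k
    using not_less_Least[of k "\<lambda>k. (u, v) \<in> ?R ^^ k"] that unfolding d_def dist_def by blast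
  obtain f where f: "f 0 = u" "f d = v" "\<forall>i<d. (f i, f (Suc i)) \<in> ?R"
    using dR relpow_fun_conv by metis
  have pre: "(u, f i) \<in> ?R ^^ i" if "i \<le> d" for i
    unfolding relpow_fun_conv using f that by (intro exI[of _ f]) auto
  have suf: "(f j, v) \<in> ?R ^^ (d - j)" if "j \<le> d" for j
    unfolding relpow_fun_conv using f that by (intro exI[of _ "\<lambda>t. f (j + t)"]) auto
  have fmin: "j - i \<le> m" if "i \<le> j" "j \<le> d" "(f i, f j) \<in> ?R ^^ m" for i j m
  proof (rule ccontr)
    assume "\<not> j - i \<le> m"
    have "(u, f j) \<in> ?R ^^ i O ?R ^^ m" using pre[of i] that by auto
    then have "(u, v) \<in> (?R ^^ i O ?R ^^ m) O ?R ^^ (d - j)" using suf[of j] that by auto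
    then have "(u, v) \<in> ?R ^^ (i + m + (d - j))" by (simp add: relpow_add)
    moreover have "i + m + (d - j) < d" using \<open>\<not> j - i \<le> m\<close> that by linarith
    ultimately show False using dmin by blast
  qed
  have fadj: "adj G (f i) (f (Suc i))" if "i < d" for i using f(3) that unfolding adj_rel_def by auto
  define j0 where "j0 = (if f 0 \<in> Z then 0 else 1::nat)"
  have d8: "8 \<le> d" using uv(3) unfolding d_def .
  have cen: "f j0 \<in> Z"
  proof (cases "f 0 \<in> Z")
    case False
    then show ?thesis using good_adj[OF gZ fadj[of 0]] d8 unfolding j0_def by simp
  qed (simp add: j0_def)
  have j1: "j0 \<le> 1" unfolding j0_def by simp
  define g where "g t = f (j0 + t)" for t
  have "\<exists>C. is_identifying_code G C \<and> 3 * card C \<le> 2 * card ?V"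
  proof (rule core[OF gZ, of g])
    show "adj G (g t) (g (Suc t))" if "t < 6" for t
      using fadj[of "j0 + t"] that j1 d8 unfolding g_def by simp
    show "g 0 \<in> Z" using cen unfolding g_def by simp
    show "b - a \<le> m" if "a \<le> b" "b \<le> 6" "(g a, g b) \<in> ?R ^^ m" for a b m
      using fmin[of "j0 + a" "j0 + b" m] that j1 d8 unfolding g_def by simp
  qed
  then obtain C where C: "is_identifying_code G C" "3 * card C \<le> 2 * card ?V" by blast
  have "gamma_ID G \<le> card C" unfolding gamma_ID_def using C(1) by (intro Least_le) blast
  then show ?thesis using C by auto
qed

end
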